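(* Let $f=\mathbb{E}_\xi[f_\xi]$ be $L_{f/h}$-relatively smooth with respect to $h$ (no relative strong convexity assumed), with minimizer $x^\star\in\operatorname{int}\operatorname{dom}h$ satisfying $\nabla f(x^\star)=0$, and suppose the noise assumption below holds with constant $\sigma^2$ and step size $\eta\le1/(2L_{f/h})$. Then the iterates of Bregman stochastic gradient descent with constant step size $\eta$ satisfy, for every $T\ge1$, $$\mathbb{E}\Big[\frac1T\sum_{t=0}^{T}D_f(x^\star,x_t)\Big]\le\frac{D_h(x^\star,x_0)}{\eta T}+\eta\sigma^2.$$
   Context: Let $C\subseteq\mathbb{R}^d$ be a closed convex set and $h:\mathbb{R}^d\to\mathbb{R}\cup\{+\infty\}$ a function satisfying the standing assumption: $h$ is twice continuously differentiable and strictly convex on $\operatorname{int} C$, and for every $y\in\mathbb{R}^d$ the problem $\min_{x\in C} h(x)-x^\top y$ has a unique solution, which lies in $\operatorname{int} C$. $h^*$ is the convex conjugate of $h$. For differentiable $\varphi$, $D_\varphi(x,y)=\varphi(x)-\varphi(y)-\nabla\varphi(y)^\top(x-y)$. A differentiable $f$ is $L$-relatively smooth w.r.t. $h$ if $D_f(x,y)\le L D_h(x,y)$ for all $x,y\in\operatorname{int}\operatorname{dom}h$. Bregman stochastic gradient descent (BSGD): given $x_0\in\operatorname{int}C$, $x_{t+1}=\arg\min_{x\in C}\{\eta g_t^\top x+D_h(x,x_t)\}$, equivalently $\nabla h(x_{t+1})=\nabla h(x_t)-\eta g_t$, where $g_t=\nabla f_{\xi_t}(x_t)$ and $\xi_t$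 are drawn independently from the distribution of $\xi$. Noise assumption: every $f_\xi$ is convex and $L_{f/h}$-relatively smooth w.r.t. $h$, $\mathbb{E}_\xi[f_\xi]=f$, and there is $\sigma^2\ge0$ such that for all $t$, $\sigma^2\ge\frac{1}{2\eta^2}\mathbb{E}_{\xi_t}\big[D_{h^*}(\nabla h(x_t)-2\eta\nabla f_{\xi_t}(x^\star),\nabla h(x_t))\big]$. *)

theory Defs
  imports "HOL-Analysis.Analysis" "HOL-Probability.Probability"
begin

definition grad :: "('a::euclidean_space \<Rightarrow> real) \<Rightarrow> 'a \<Rightarrow> 'a" where
  "grad \<phi> y = (SOME g. (\<phi> has_derivative (\<lambda>v. g \<bullet> v)) (at y))"

definition bregman :: "('a::euclidean_space \<Rightarrow> real) \<Rightarrow> 'a \<Rightarrow> 'a \<Rightarrow> real" where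
  "bregman \<phi> x y = \<phi> x - \<phi> y - grad \<phi> y \<bullet> (x - y)"

definition strict_convex_on :: "'a::real_vector set \<Rightarrow> ('a \<Rightarrow> real) \<Rightarrow> bool" where
  "strict_convex_on S f \<longleftrightarrow> (\<forall>x\<in>S. \<forall>y\<in>S. x \<noteq> y \<longrightarrow>
     (\<forall>u::real. 0 < u \<and> u < 1 \<longrightarrow> f ((1 - u) *\<^sub>R x + u *\<^sub>R y) < (1 - u) * f x + u * f y))"

text \<open>Convex conjugate of h, where h is taken to be +infinity outside C
  (so dom h = C): h*(y) = sup over x in C of x.y - h(x).\<close>
definition conj_on :: "'a::euclidean_space set \<Rightarrow> ('a \<Rightarrow> real) \<Rightarrow> 'a \<Rightarrow> real" where
  "conj_on C h y = (SUP x\<in>C. x \<bullet> y - h x)"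

definition rel_smooth :: "'a::euclidean_space set \<Rightarrow> real \<Rightarrow> ('a \<Rightarrow> real) \<Rightarrow> ('a \<Rightarrow> real) \<Rightarrow> bool" where
  "rel_smooth C L f h \<longleftrightarrow> (\<forall>x\<in>interior C. f differentiable (at x)) \<and>
     (\<forall>x\<in>interior C. \<forall>y\<in>interior C. bregman f x y \<le> L * bregman h x y)"

definition bsgd_step :: "'a::euclidean_space set \<Rightarrow> ('a \<Rightarrow> real) \<Rightarrow> real \<Rightarrow> 'a \<Rightarrow> 'a \<Rightarrow> 'a" where
  "bsgd_step C h \<eta> g xt = (THE x. x \<in> C \<and>
     (\<forall>z\<in>C. \<eta> * (g \<bullet> x) + bregman h x xt \<le> \<eta> * (g \<bullet> z) + bregman h z xt))"

text \<open>BSGD iterates along a sample path \<omega> (\<omega> t = \<xi>_t), g_t = grad f_{\<xi>_t}(x_t).\<close>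
fun bsgd :: "'a::euclidean_space set \<Rightarrow> ('a \<Rightarrow> real) \<Rightarrow> real \<Rightarrow> ('b \<Rightarrow> 'a \<Rightarrow> real) \<Rightarrow> 'a
             \<Rightarrow> (nat \<Rightarrow> 'b) \<Rightarrow> nat \<Rightarrow> 'a" where
  "bsgd C h \<eta> fx x0 \<omega> 0 = x0"
| "bsgd C h \<eta> fx x0 \<omega> (Suc t) =
     bsgd_step C h \<eta> (grad (fx (\<omega> t)) (bsgd C h \<eta> fx x0 \<omega> t)) (bsgd C h \<eta> fx x0 \<omega> t)"

end

theory Submission
  imports Defs
begin


lemma linear_inner_rep:
  fixes D :: "'a::euclidean_space \<Rightarrow> real"
  assumes "linear D"
  shows "D = (\<lambda>v. (\<Sum>b\<in>Basis. D b *\<^sub>R b) \<bullet> v)"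
proof
  fix v :: 'a
  have "D v = D (\<Sum>b\<in>Basis. (v \<bullet> b) *\<^sub>R b)" by (simp add: euclidean_representation)
  also have "\<dots> = (\<Sum>b\<in>Basis. (v \<bullet> b) * D b)"
    using assms by (simp add: linear_sum linear_scale)
  also have "\<dots> = (\<Sum>b\<in>Basis. D b *\<^sub>R b) \<bullet> v"
    by (simp add: inner_sum_left inner_sum_right inner_commute mult.commute)
  finally show "D v = (\<Sum>b\<in>Basis. D b *\<^sub>R b) \<bullet> v" .
qed

lemma grad_works:
  fixes f :: "'a::euclidean_space \<Rightarrow> real"
  assumes "f differentiable (at x)"
  shows "(f has_derivative (\<lambda>v. grad f x \<bullet> v)) (at x)"
proof -
  obtain D where D: "(f has_derivative D) (at x)" using assms differentiable_def by blast
  then have "linear D" using has_derivative_linear by blast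
  then have "D = (\<lambda>v. (\<Sum>b\<in>Basis. D b *\<^sub>R b) \<bullet> v)" by (rule linear_inner_rep)
  with D have "\<exists>g. (f has_derivative (\<lambda>v. g \<bullet> v)) (at x)" by metis
  then show ?thesis unfolding grad_def by (rule someI_ex)
qed

lemma grad_eqI:
  fixes f :: "'a::euclidean_space \<Rightarrow> real"
  assumes "(f has_derivative (\<lambda>v. g \<bullet> v)) (at x)"
  shows "grad f x = g"
proof -
  have d: "f differentiable (at x)" using assms differentiable_def by blast
  have "(\<lambda>v. grad f x \<bullet> v) = (\<lambda>v. g \<bullet> v)"
    using has_derivative_unique[OF grad_works[OF d] assms] .
  then have "grad f x \<bullet> (grad f x - g) = g \<bullet> (grad f x - g)" by metis
  then have "(grad f x - g) \<bullet> (grad f x - g) = 0" by (simp add: inner_diff_left)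
  then show ?thesis by simp
qed

lemma dir_deriv:
  fixes f :: "'a::euclidean_space \<Rightarrow> real"
  assumes "(f has_derivative (\<lambda>v. g \<bullet> v)) (at x)"
  shows "((\<lambda>s. (f (x + s *\<^sub>R d) - f x) / s) \<longlongrightarrow> g \<bullet> d) (at 0)"
proof -
  have l: "((\<lambda>s::real. x + s *\<^sub>R d) has_derivative (\<lambda>s. s *\<^sub>R d)) (at 0)"
    by (auto intro!: derivative_eq_intros)
  have "((\<lambda>s. f (x + s *\<^sub>R d)) has_derivative (\<lambda>s. g \<bullet> (s *\<^sub>R d))) (at 0)"
    using has_derivative_compose[OF l, of f "\<lambda>v. g \<bullet> v"] assms by simp
  then have "((\<lambda>s. f (x + s *\<^sub>R d)) has_field_derivative (g \<bullet> d)) (at 0)"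
    by (simp add: has_field_derivative_def mult.commute[of _ "g \<bullet> d"])
  then show ?thesis by (simp add: has_field_derivative_iff)
qed

lemma convex_tangent:
  fixes f :: "'a::euclidean_space \<Rightarrow> real"
  assumes cv: "convex_on S f" and S: "convex S" and x: "x \<in> S" and y: "y \<in> S"
    and d: "(f has_derivative (\<lambda>v. g \<bullet> v)) (at x)"
  shows "f x + g \<bullet> (y - x) \<le> f y"
proof -
  have lim: "((\<lambda>s. (f (x + s *\<^sub>R (y - x)) - f x) / s) \<longlongrightarrow> g \<bullet> (y - x)) (at_right 0)"
    using dir_deriv[OF d] filterlim_at_split by blast
  have ev: "eventually (\<lambda>s. (f (x + s *\<^sub>R (y - x)) - f x) / s \<le> f y - f x) (at_right (0::real))"
    unfolding eventually_at_right_field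
  proof (intro exI[of _ 1] conjI allI impI)
    show "(0::real) < 1" by simp
    fix s :: real assume s: "0 < s" "s < 1"
    have eq: "x + s *\<^sub>R (y - x) = (1 - s) *\<^sub>R x + s *\<^sub>R y" by (simp add: algebra_simps)
    have "f ((1 - s) *\<^sub>R x + s *\<^sub>R y) \<le> (1 - s) * f x + s * f y"
      using cv x y s by (intro convex_onD) auto
    then have "f (x + s *\<^sub>R (y - x)) - f x \<le> s * (f y - f x)" unfolding eq by (simp add: algebra_simps)
    then show "(f (x + s *\<^sub>R (y - x)) - f x) / s \<le> f y - f x"
      using s by (simp add: divide_le_eq mult.commute)
  qed
  have "g \<bullet> (y - x) \<le> f y - f x"
    by (rule tendsto_upperbound[OF lim ev]) simp
  then show ?thesis by simp
qed



locale hsetting =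
  fixes C :: "'a::euclidean_space set" and h :: "'a \<Rightarrow> real"
  assumes Cconv: "convex C"
    and h_der: "\<forall>x\<in>interior C. (h has_derivative (\<lambda>v. grad h x \<bullet> v)) (at x)"
    and gh_cont: "continuous_on (interior C) (grad h)"
    and h_strict: "strict_convex_on (interior C) h"
    and h_unique: "\<forall>y. \<exists>!x. x \<in> C \<and> (\<forall>z\<in>C. h x - x \<bullet> y \<le> h z - z \<bullet> y)"
    and h_interior: "\<forall>y x. x \<in> C \<and> (\<forall>z\<in>C. h x - x \<bullet> y \<le> h z - z \<bullet> y) \<longrightarrow> x \<in> interior C"
begin

abbreviation "U \<equiv> interior C"
abbreviation "gh \<equiv> grad h"
definition zh :: "'a \<Rightarrow> 'a" where
  "zh y = (THE x. x \<in> C \<and> (\<forall>z\<in>C. h x - x \<bullet> y \<le> h z - z \<bullet> y))"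

lemma U_open: "open U" by simp
lemma U_conv: "convex U" using Cconv convex_interior by blast

lemma h_convex: "convex_on U h"
proof (rule convex_onI)
  fix t x y assume t: "(0::real) < t" "t < 1" and xy: "x \<in> U" "y \<in> U"
  show "h ((1 - t) *\<^sub>R x + t *\<^sub>R y) \<le> (1 - t) * h x + t * h y"
  proof (cases "x = y")
    case True then show ?thesis by (simp add: algebra_simps flip: scaleR_add_left)
  next
    case False then show ?thesis using h_strict t xy unfolding strict_convex_on_def
      by (meson less_imp_le)
  qed
qed (rule U_conv)

lemma breg_h_nonneg: "x \<in> U \<Longrightarrow> y \<in> U \<Longrightarrow> bregman h x y \<ge> 0"
  using convex_tangent[OF h_convex U_conv _ _ h_der[rule_format], of y x]
  unfolding bregman_def by simp

lemma zh_prop: "zh y \<in> C \<and> (\<forall>z\<in>C. h (zh y) - zh y \<bullet> y \<le> h z - z \<bullet> y)"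
  unfolding zh_def using theI'[OF h_unique[rule_format, of y]] by blast

lemma zh_U: "zh y \<in> U" using zh_prop h_interior by blast

lemma zh_eqI: "x \<in> C \<Longrightarrow> (\<forall>z\<in>C. h x - x \<bullet> y \<le> h z - z \<bullet> y) \<Longrightarrow> zh y = x"
  unfolding zh_def using h_unique by (intro the1_equality) auto

lemma gh_zh: "gh (zh y) = y"
proof -
  let ?x = "zh y"
  have d: "((\<lambda>x. h x - x \<bullet> y) has_derivative (\<lambda>v. gh ?x \<bullet> v - v \<bullet> y)) (at ?x)"
    using h_der zh_U by (auto intro!: derivative_eq_intros)
  have "eventually (\<lambda>x. x \<in> U) (at ?x)"
    using zh_U U_open eventually_at_topological by blast
  then have "eventually (\<lambda>x. h ?x - ?x \<bullet> y \<le> h x - x \<bullet> y) (at ?x)"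
    by eventually_elim (use zh_prop interior_subset in blast)
  from has_derivative_local_min[OF d this]
  have "(\<lambda>v. gh ?x \<bullet> v - v \<bullet> y) = (\<lambda>v. 0)" .
  then have "gh ?x \<bullet> (gh ?x - y) - (gh ?x - y) \<bullet> y = 0" by metis
  then have "(gh ?x - y) \<bullet> (gh ?x - y) = 0" by (simp add: inner_diff_left inner_commute)
  then show ?thesis by simp
qed

lemma gh_inj: assumes "x \<in> U" "x' \<in> U" "gh x = gh x'" shows "x = x'"
proof (rule ccontr)
  assume ne: "x \<noteq> x'"
  let ?g = "gh x"
  have t1: "h x + ?g \<bullet> (x' - x) \<le> h x'"
    using convex_tangent[OF h_convex U_conv assms(1,2) h_der[rule_format, OF assms(1)]] .
  have t2: "h x' + ?g \<bullet> (x - x') \<le> h x"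
    using convex_tangent[OF h_convex U_conv assms(2,1) h_der[rule_format, OF assms(2)]] assms(3) by simp
  let ?m = "(1 - 1/2) *\<^sub>R x + (1/2) *\<^sub>R x'"
  have mU: "?m \<in> U" using U_conv assms(1,2) by (intro convexD) auto
  have lt: "h ?m < (1 - 1/2) * h x + (1/2) * h x'"
  proof -
    have "\<forall>u::real. 0 < u \<and> u < 1 \<longrightarrow> h ((1 - u) *\<^sub>R x + u *\<^sub>R x') < (1 - u) * h x + u * h x'"
      using h_strict assms ne unfolding strict_convex_on_def by blast
    from spec[OF this, of "1/2"] show ?thesis by simp
  qed
  have t3: "h x + ?g \<bullet> (?m - x) \<le> h ?m"
    using convex_tangent[OF h_convex U_conv assms(1) mU h_der[rule_format, OF assms(1)]] .
  have "?m - x = (1/2) *\<^sub>R (x' - x)" by (simp add: algebra_simps) (metis field_sum_of_halves scaleR_add_left scaleR_one)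
  then have "?g \<bullet> (?m - x) = (1/2) * (?g \<bullet> (x' - x))" by simp
  moreover have "?g \<bullet> (x - x') = - (?g \<bullet> (x' - x))" by (simp add: inner_diff_right)
  ultimately have "h x + (1/2) * (?g \<bullet> (x' - x)) \<le> h ?m" "h x' = h x + ?g \<bullet> (x' - x)"
    using t1 t2 t3 by linarith+
  then show False using lt by (simp add: field_simps)
qed

lemma zh_gh: "x \<in> U \<Longrightarrow> zh (gh x) = x"
  using gh_inj[OF zh_U _ gh_zh] by blast

lemma conj_ge: "z \<in> C \<Longrightarrow> z \<bullet> y - h z \<le> zh y \<bullet> y - h (zh y)"
proof -
  assume "z \<in> C" then have "h (zh y) - zh y \<bullet> y \<le> h z - z \<bullet> y" using zh_prop by blast
  then show ?thesis by linarith
qed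

lemma conj_eq: "conj_on C h y = zh y \<bullet> y - h (zh y)"
  unfolding conj_on_def
  by (rule cSup_eq_maximum) (use zh_prop conj_ge in auto)

lemma zh_cont: "continuous_on UNIV zh"
proof -
  have "continuous_on (gh ` U) zh"
    by (rule continuous_on_inverse_open[OF U_open gh_cont]) (auto simp: zh_gh)
  moreover have "gh ` U = UNIV" using zh_U gh_zh by (metis UNIV_eq_I image_eqI)
  ultimately show ?thesis by simp
qed

lemma conj_deriv: "(conj_on C h has_derivative (\<lambda>v. zh y \<bullet> v)) (at y)"
  unfolding has_derivative_at
proof
  show "bounded_linear (\<lambda>v. zh y \<bullet> v)" by (rule bounded_linear_inner_right)
  let ?R = "\<lambda>k. conj_on C h (y + k) - conj_on C h y - zh y \<bullet> k"
  have bnd: "norm (?R k) / norm k \<le> norm (zh (y + k) - zh y)" for k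
  proof -
    have lo: "?R k \<ge> 0" using conj_ge[of "zh y" "y + k"] zh_prop unfolding conj_eq
      by (simp add: inner_add_right)
    have up: "?R k \<le> (zh (y + k) - zh y) \<bullet> k"
      using conj_ge[of "zh (y+k)" y] zh_prop unfolding conj_eq
      by (simp add: inner_add_right inner_diff_left)
    also have "\<dots> \<le> norm (zh (y + k) - zh y) * norm k" by (rule norm_cauchy_schwarz)
    finally have "norm (?R k) \<le> norm (zh (y + k) - zh y) * norm k" using lo by simp
    then show ?thesis
      by (cases "k = 0") (auto simp: divide_le_eq)
  qed
  have c: "isCont zh y" using zh_cont by (simp add: continuous_on_eq_continuous_at)
  have "((\<lambda>k. norm (zh (y + k) - zh y)) \<longlongrightarrow> 0) (at 0)"
  proof -
    have "((\<lambda>k. zh (y + k)) \<longlongrightarrow> zh y) (at 0)"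
      using c by (simp add: isCont_def LIM_offset_zero)
    then show ?thesis by (simp add: tendsto_norm_zero_iff LIM_zero_iff)
  qed
  then show "((\<lambda>k. norm (?R k) / norm k) \<longlongrightarrow> 0) (at 0)"
    by (rule Lim_null_comparison[rotated]) (use bnd in auto)
qed

lemma grad_conj: "grad (conj_on C h) y = zh y"
  by (rule grad_eqI[OF conj_deriv])

lemma conj_cont: "continuous_on UNIV (conj_on C h)"
  using conj_deriv has_derivative_continuous continuous_at_imp_continuous_on by blast

lemma breg_conj: "bregman (conj_on C h) u y = conj_on C h u - conj_on C h y - zh y \<bullet> (u - y)"
  unfolding bregman_def grad_conj ..

lemma bsgd_step_eq: "bsgd_step C h \<eta> g x = zh (gh x - \<eta> *\<^sub>R g)"
proof -
  have "(\<lambda>x'. x' \<in> C \<and> (\<forall>z\<in>C. \<eta> * (g \<bullet> x') + bregman h x' x \<le> \<eta> * (g \<bullet> z) + bregman h z x))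
      = (\<lambda>x'. x' \<in> C \<and> (\<forall>z\<in>C. h x' - x' \<bullet> (gh x - \<eta> *\<^sub>R g) \<le> h z - z \<bullet> (gh x - \<eta> *\<^sub>R g)))"
    unfolding bregman_def
    by (intro ext conj_cong refl ball_cong) (auto simp: inner_diff_right inner_diff_left inner_commute algebra_simps)
  then show ?thesis unfolding bsgd_step_def zh_def by simp
qed

end


context hsetting begin

lemma rs_deriv: "rel_smooth C L \<phi> h \<Longrightarrow> z \<in> U \<Longrightarrow> (\<phi> has_derivative (\<lambda>v. grad \<phi> z \<bullet> v)) (at z)"
  unfolding rel_smooth_def by (blast intro: grad_works)

lemma breg_nonneg_gen:
  assumes "convex_on U \<phi>" "rel_smooth C L \<phi> h" "z \<in> U" "w \<in> U"
  shows "bregman \<phi> z w \<ge> 0"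
  using convex_tangent[OF assms(1) U_conv assms(4,3) rs_deriv[OF assms(2,4)]]
  unfolding bregman_def by simp

lemma conj_gh: "x \<in> U \<Longrightarrow> conj_on C h (gh x) = x \<bullet> gh x - h x"
  using conj_eq zh_gh by simp

lemma step_ineq:
  assumes x: "x \<in> U" and xs: "xs \<in> U" and cvx: "convex_on U \<phi>" and sm: "rel_smooth C L \<phi> h"
    and L: "L > 0" and eta: "\<eta> > 0" "2 * \<eta> * L \<le> 1"
  shows "\<eta> * (bregman \<phi> xs x + grad \<phi> xs \<bullet> (x - xs))
      \<le> bregman h xs x - bregman h xs (zh (gh x - \<eta> *\<^sub>R grad \<phi> x))
         + bregman (conj_on C h) (gh x - (2 * \<eta>) *\<^sub>R grad \<phi> xs) (gh x) / 2"
proof -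
  define g where "g = grad \<phi> x"
  define v where "v = grad \<phi> xs"
  define x' where "x' = zh (gh x - \<eta> *\<^sub>R g)"
  define cj where "cj = conj_on C h"
  define B where "B u = cj u - cj (gh x) - x \<bullet> (u - gh x)" for u
  define a where "a = gh x - (2 * \<eta>) *\<^sub>R (g - v)"
  define b where "b = gh x - (2 * \<eta>) *\<^sub>R v"
  have x'U: "x' \<in> U" unfolding x'_def by (rule zh_U)
  have ghx': "gh x' = gh x - \<eta> *\<^sub>R g" unfolding x'_def by (rule gh_zh)
  have Bb: "B b = bregman cj b (gh x)"
    unfolding B_def cj_def breg_conj zh_gh[OF x] ..
  have three: "\<eta> * (g \<bullet> (x - xs)) = bregman h xs x - bregman h xs x' + bregman h x x'"
    unfolding bregman_def ghx' by (simp add: algebra_simps inner_diff_left inner_diff_right)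
  have gsplit: "g \<bullet> (x - xs) = bregman \<phi> xs x + bregman \<phi> x xs + v \<bullet> (x - xs)"
    unfolding bregman_def g_def v_def by (simp add: algebra_simps inner_diff_left inner_diff_right)
  have Dhx': "bregman h x x' = B (gh x - \<eta> *\<^sub>R g)"
  proof -
    have "cj (gh x - \<eta> *\<^sub>R g) = x' \<bullet> (gh x - \<eta> *\<^sub>R g) - h x'"
      unfolding cj_def conj_eq x'_def ..
    moreover have "cj (gh x) = x \<bullet> gh x - h x" unfolding cj_def using conj_gh[OF x] .
    ultimately show ?thesis unfolding B_def bregman_def ghx'
      by (simp add: algebra_simps inner_diff_left inner_diff_right inner_commute)
  qed
  have mid: "B (gh x - \<eta> *\<^sub>R g) \<le> B a / 2 + B b / 2"
  proof -
    define m where "m = gh x - \<eta> *\<^sub>R g"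
    have am: "m = (1/2) *\<^sub>R a + (1/2) *\<^sub>R b" unfolding m_def a_def b_def
      by (simp add: algebra_simps) (metis field_sum_of_halves scaleR_add_left scaleR_one)
    have c1: "zh m \<bullet> a - h (zh m) \<le> cj a" unfolding cj_def conj_eq
      by (rule conj_ge) (use zh_prop in blast)
    have c2: "zh m \<bullet> b - h (zh m) \<le> cj b" unfolding cj_def conj_eq
      by (rule conj_ge) (use zh_prop in blast)
    have "cj m = (zh m \<bullet> a - h (zh m)) / 2 + (zh m \<bullet> b - h (zh m)) / 2"
      unfolding cj_def conj_eq by (subst (2) am) (simp add: inner_add_right field_simps)
    then have "cj m \<le> cj a / 2 + cj b / 2" using c1 c2 unfolding diff_divide_distrib by linarith
    moreover have "x \<bullet> (m - gh x) = x \<bullet> (a - gh x) / 2 + x \<bullet> (b - gh x) / 2"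
      unfolding am by (simp add: algebra_simps inner_diff_right inner_add_right diff_divide_distrib)
    ultimately show ?thesis unfolding B_def m_def[symmetric] by (simp add: field_simps)
  qed
  have Ba: "B a \<le> 2 * \<eta> * bregman \<phi> x xs"
  proof -
    define z where "z = zh a"
    have zU: "z \<in> U" unfolding z_def by (rule zh_U)
    have "cj a = z \<bullet> a - h z" unfolding cj_def conj_eq z_def ..
    moreover have "cj (gh x) = x \<bullet> gh x - h x" unfolding cj_def using conj_gh[OF x] .
    ultimately have e1: "B a = - bregman h z x - (2 * \<eta>) * ((z - x) \<bullet> (g - v))"
      unfolding B_def bregman_def a_def by (simp add: algebra_simps inner_diff_left inner_diff_right inner_commute)
    have s1: "bregman \<phi> z x \<le> L * bregman h z x" using sm zU x unfolding rel_smooth_def by blast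
    have hnn: "bregman h z x \<ge> 0" using breg_h_nonneg zU x by blast
    have "(2 * \<eta>) * bregman \<phi> z x \<le> (2 * \<eta>) * (L * bregman h z x)"
      using s1 eta by (intro mult_left_mono) auto
    also have "\<dots> = (2 * \<eta> * L) * bregman h z x" by simp
    also have "\<dots> \<le> bregman h z x" using eta hnn mult_right_mono[of "2 * \<eta> * L" 1 "bregman h z x"] by simp
    finally have s2: "(2 * \<eta>) * bregman \<phi> z x \<le> bregman h z x" .
    have s3: "bregman \<phi> z xs \<ge> 0" using breg_nonneg_gen[OF cvx sm zU xs] .
    have e2: "bregman \<phi> z x + (z - x) \<bullet> (g - v) = bregman \<phi> z xs - bregman \<phi> x xs"
      unfolding bregman_def g_def v_def by (simp add: algebra_simps inner_diff_left inner_diff_right inner_commute)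
    have "B a \<le> - (2 * \<eta>) * (bregman \<phi> z x + (z - x) \<bullet> (g - v))"
      using e1 s2 by (simp add: algebra_simps)
    also have "\<dots> = (2 * \<eta>) * (bregman \<phi> x xs - bregman \<phi> z xs)" unfolding e2 by (simp add: algebra_simps)
    also have "\<dots> \<le> (2 * \<eta>) * bregman \<phi> x xs" using s3 eta by (simp add: mult_left_mono)
    finally show ?thesis by simp
  qed
  have "\<eta> * (bregman \<phi> xs x + bregman \<phi> x xs + v \<bullet> (x - xs))
        \<le> bregman h xs x - bregman h xs x' + \<eta> * bregman \<phi> x xs + B b / 2"
  proof -
    have e: "\<eta> * (g \<bullet> (x - xs)) = \<eta> * (bregman \<phi> xs x + bregman \<phi> x xs + v \<bullet> (x - xs))"
      using gsplit by simp
    have "B a / 2 \<le> \<eta> * bregman \<phi> x xs" using Ba by simp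
    then show ?thesis using three e Dhx' mid by linarith
  qed
  then show ?thesis unfolding Bb unfolding cj_def b_def x'_def g_def v_def
    by (simp add: algebra_simps)
qed

end


lemma nn_integral_le_meas:
  assumes "\<And>g. g \<in> borel_measurable M \<Longrightarrow> (\<And>x. x \<in> space M \<Longrightarrow> g x \<le> F x) \<Longrightarrow> integral\<^sup>N M g \<le> B"
  shows "integral\<^sup>N M F \<le> B"
  unfolding nn_integral_def
proof (rule SUP_least)
  fix g assume "g \<in> {g. simple_function M g \<and> g \<le> F}"
  then have g: "simple_function M g" "g \<le> F" by auto
  have "integral\<^sup>S M g = integral\<^sup>N M g" using nn_integral_eq_simple_integral[OF g(1)] by simp
  also have "\<dots> \<le> B" using assms[OF borel_measurable_simple_function[OF g(1)]] g(2) by (auto simp: le_fun_def)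
  finally show "integral\<^sup>S M g \<le> B" .
qed

lemma nn_integral_add_const_le:
  assumes P: "prob_space M" and g: "g \<in> borel_measurable M"
    and le: "\<And>x. x \<in> space M \<Longrightarrow> g x \<le> c + G x"
  shows "integral\<^sup>N M g \<le> c + integral\<^sup>N M G"
proof (cases "c = top")
  case True then show ?thesis by simp
next
  case ctop: False
  have m: "(\<lambda>x. g x - c) \<in> borel_measurable M" using g by measurable
  have "integral\<^sup>N M g \<le> (\<integral>\<^sup>+x. c + (g x - c) \<partial>M)"
    by (intro nn_integral_mono) (metis add.commute diff_add_cancel_ennreal le_iff_add linorder_le_cases order_refl add_increasing2 zero_le diff_eq_0_iff_ennreal)
  also have "\<dots> = (\<integral>\<^sup>+x. c \<partial>M) + (\<integral>\<^sup>+x. g x - c \<partial>M)"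
    by (rule nn_integral_add) (use m in auto)
  also have "(\<integral>\<^sup>+x. c \<partial>M) = c" using prob_space.emeasure_space_1[OF P] by simp
  also have "(\<integral>\<^sup>+x. g x - c \<partial>M) \<le> integral\<^sup>N M G"
    by (intro nn_integral_mono) (use le ctop in \<open>simp add: ennreal_minus_le_iff\<close>)
  finally show ?thesis by (simp add: add_left_mono)
qed

lemma nn_integral_cmult_le:
  assumes c: "c \<ge> 0"
  shows "(\<integral>\<^sup>+x. ennreal c * F x \<partial>M) \<le> ennreal c * integral\<^sup>N M F"
proof (rule nn_integral_le_meas)
  fix g assume g: "g \<in> borel_measurable M" and le: "\<And>x. x \<in> space M \<Longrightarrow> g x \<le> ennreal c * F x"
  show "integral\<^sup>N M g \<le> ennreal c * integral\<^sup>N M F"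
  proof (cases "c = 0")
    case True
    then have "integral\<^sup>N M g = 0" using le by (intro nn_integral_zero') (auto intro!: AE_I2 simp: le_zero_eq)
    then show ?thesis by simp
  next
    case False
    define g' where "g' x = ennreal (1 / c) * g x" for x
    have gm: "g' \<in> borel_measurable M" unfolding g'_def using g by measurable
    have gg: "g x = ennreal c * g' x" for x
      unfolding g'_def using c False by (simp add: ennreal_mult'[symmetric] mult.assoc[symmetric])
    have "g' x \<le> F x" if "x \<in> space M" for x
    proof -
      have "g' x \<le> ennreal (1/c) * (ennreal c * F x)" unfolding g'_def using le[OF that] by (rule mult_left_mono) simp
      also have "\<dots> = F x" using c False by (simp add: ennreal_mult'[symmetric] mult.assoc[symmetric])
      finally show ?thesis .
    qed
    then have "integral\<^sup>N M g' \<le> integral\<^sup>N M F" by (intro nn_integral_mono) auto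
    then show ?thesis unfolding gg nn_integral_cmult[OF gm] by (rule mult_left_mono) simp
  qed
qed



context hsetting begin

lemma grad_exp:
  fixes P :: "'b measure" and fx :: "'b \<Rightarrow> 'a \<Rightarrow> real"
  assumes fxc: "\<forall>\<xi>\<in>space P. convex_on U (fx \<xi>) \<and> rel_smooth C L (fx \<xi>) h"
    and fxi: "\<forall>x\<in>U. integrable P (\<lambda>\<xi>. fx \<xi> x)"
    and fm: "\<forall>x\<in>U. f x = (\<integral>\<xi>. fx \<xi> x \<partial>P)"
    and fd: "(f has_derivative (\<lambda>v. grad f w \<bullet> v)) (at w)"
    and w: "w \<in> U"
  shows "(\<lambda>\<xi>. grad (fx \<xi>) w \<bullet> d) \<in> borel_measurable P \<and> integrable P (\<lambda>\<xi>. grad (fx \<xi>) w \<bullet> d)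
         \<and> (\<integral>\<xi>. grad (fx \<xi>) w \<bullet> d \<partial>P) = grad f w \<bullet> d"
proof (cases "d = 0")
  case True then show ?thesis by simp
next
  case False
  obtain r where r: "r > 0" "ball w r \<subseteq> U" using w U_open openE by blast
  define s0 where "s0 = r / (2 * norm d)"
  have s0: "s0 > 0" using r False unfolding s0_def by simp
  have inU: "w + t *\<^sub>R d \<in> U" if "\<bar>t\<bar> \<le> s0" for t
  proof -
    have "norm (t *\<^sub>R d) \<le> s0 * norm d" using that by (simp add: mult_right_mono)
    also have "\<dots> < r" using r False unfolding s0_def by (simp add: field_simps)
    finally show ?thesis using r(2) by (auto simp: dist_norm)
  qed
  define s where "s n = s0 / real (Suc n)" for n
  have s_pos: "s n > 0" for n using s0 unfolding s_def by simp
  have s_le: "s n \<le> s0" for n using s0 unfolding s_def by (simp add: divide_le_eq)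
  have s_lim: "filterlim s (at 0) sequentially"
  proof -
    have "(\<lambda>n. s0 * inverse (real (Suc n))) \<longlonglongrightarrow> s0 * 0"
      by (intro tendsto_mult tendsto_const LIMSEQ_inverse_real_of_nat)
    then have "s \<longlonglongrightarrow> 0" unfolding s_def by (simp add: divide_inverse)
    moreover have "\<forall>\<^sub>F x in sequentially. s x \<noteq> 0" using s_pos by (simp add: less_imp_neq[symmetric])
    ultimately show ?thesis by (auto simp: filterlim_at)
  qed
  define q where "q n \<xi> = (fx \<xi> (w + s n *\<^sub>R d) - fx \<xi> w) / s n" for n \<xi>
  define up where "up \<xi> = (fx \<xi> (w + s0 *\<^sub>R d) - fx \<xi> w) / s0" for \<xi>
  define lo where "lo \<xi> = (fx \<xi> w - fx \<xi> (w + (- s0) *\<^sub>R d)) / s0" for \<xi>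
  have wU1: "w + s n *\<^sub>R d \<in> U" for n using inU s_le s_pos by (simp add: abs_of_pos)
  have wU2: "w + s0 *\<^sub>R d \<in> U" "w + (- s0) *\<^sub>R d \<in> U" using inU[of s0] inU[of "-s0"] s0 by auto
  have q_int: "integrable P (q n)" for n unfolding q_def using fxi wU1 w by auto
  have up_int: "integrable P up" unfolding up_def using fxi wU2 w by auto
  have lo_int: "integrable P lo" unfolding lo_def using fxi wU2 w by auto
  have q_lim: "(\<lambda>n. q n \<xi>) \<longlonglongrightarrow> grad (fx \<xi>) w \<bullet> d" if "\<xi> \<in> space P" for \<xi>
  proof -
    have "((\<lambda>t. (fx \<xi> (w + t *\<^sub>R d) - fx \<xi> w) / t) \<longlongrightarrow> grad (fx \<xi>) w \<bullet> d) (at 0)"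
      using dir_deriv rs_deriv fxc that w by blast
    from filterlim_compose[OF this s_lim] show ?thesis unfolding q_def by simp
  qed
  have bnds: "lo \<xi> \<le> grad (fx \<xi>) w \<bullet> d \<and> grad (fx \<xi>) w \<bullet> d \<le> q n \<xi> \<and> q n \<xi> \<le> up \<xi>"
    if "\<xi> \<in> space P" for \<xi> n
  proof -
    let ?\<phi> = "fx \<xi>" and ?g = "grad (fx \<xi>) w"
    have cv: "convex_on U ?\<phi>" and dd: "(?\<phi> has_derivative (\<lambda>v. ?g \<bullet> v)) (at w)"
      using fxc that rs_deriv w by blast+
    have t1: "?\<phi> w + ?g \<bullet> ((w + (- s0) *\<^sub>R d) - w) \<le> ?\<phi> (w + (- s0) *\<^sub>R d)"
      by (rule convex_tangent[OF cv U_conv w wU2(2) dd])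
    have t2: "?\<phi> w + ?g \<bullet> ((w + s n *\<^sub>R d) - w) \<le> ?\<phi> (w + s n *\<^sub>R d)"
      by (rule convex_tangent[OF cv U_conv w wU1 dd])
    define t where "t = s n / s0"
    have t: "0 \<le> t" "t \<le> 1" using s_pos s_le s0 unfolding t_def by (auto simp: less_imp_le)
    have eqp: "w + s n *\<^sub>R d = (1 - t) *\<^sub>R w + t *\<^sub>R (w + s0 *\<^sub>R d)"
      using s0 unfolding t_def by (simp add: algebra_simps)
    have t3: "?\<phi> (w + s n *\<^sub>R d) \<le> (1 - t) * ?\<phi> w + t * ?\<phi> (w + s0 *\<^sub>R d)"
      unfolding eqp using t w wU2(1) by (intro convex_onD[OF cv]) auto
    have "lo \<xi> \<le> ?g \<bullet> d"
      using t1 s0 unfolding lo_def by (simp add: divide_le_eq algebra_simps)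
    moreover have "?g \<bullet> d \<le> q n \<xi>"
      using t2 s_pos[of n] unfolding q_def by (simp add: le_divide_eq algebra_simps)
    moreover have "q n \<xi> \<le> up \<xi>"
    proof -
      have "?\<phi> (w + s n *\<^sub>R d) - ?\<phi> w \<le> t * (?\<phi> (w + s0 *\<^sub>R d) - ?\<phi> w)"
        using t3 by (simp add: algebra_simps)
      then have "(?\<phi> (w + s n *\<^sub>R d) - ?\<phi> w) / s n \<le> t * (?\<phi> (w + s0 *\<^sub>R d) - ?\<phi> w) / s n"
        using s_pos[of n] by (simp add: divide_right_mono)
      also have "\<dots> = up \<xi>" unfolding up_def t_def using s_pos[of n] s0 by simp
      finally show ?thesis unfolding q_def .
    qed
    ultimately show ?thesis by blast
  qed
  have meas: "(\<lambda>\<xi>. grad (fx \<xi>) w \<bullet> d) \<in> borel_measurable P"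
    by (rule borel_measurable_LIMSEQ_real[OF q_lim]) (use q_int in auto)
  have dom: "AE \<xi> in P. norm (q n \<xi>) \<le> \<bar>lo \<xi>\<bar> + \<bar>up \<xi>\<bar>" for n
    using bnds by (intro AE_I2) (smt (verit) real_norm_def)
  have wint: "integrable P (\<lambda>\<xi>. \<bar>lo \<xi>\<bar> + \<bar>up \<xi>\<bar>)" using lo_int up_int by auto
  have int: "integrable P (\<lambda>\<xi>. grad (fx \<xi>) w \<bullet> d)"
    by (rule integrable_dominated_convergence[where s=q, OF meas _ wint _ dom])
       (use q_int q_lim in \<open>auto intro: AE_I2\<close>)
  have lim1: "(\<lambda>n. \<integral>\<xi>. q n \<xi> \<partial>P) \<longlonglongrightarrow> (\<integral>\<xi>. grad (fx \<xi>) w \<bullet> d \<partial>P)"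
    by (rule integral_dominated_convergence[where s=q, OF meas _ wint _ dom])
       (use q_int q_lim in \<open>auto intro: AE_I2\<close>)
  have qi: "(\<integral>\<xi>. q n \<xi> \<partial>P) = (f (w + s n *\<^sub>R d) - f w) / s n" for n
    unfolding q_def using fm fxi wU1 w by simp
  have lim2: "(\<lambda>n. \<integral>\<xi>. q n \<xi> \<partial>P) \<longlonglongrightarrow> grad f w \<bullet> d"
    unfolding qi using filterlim_compose[OF dir_deriv[OF fd] s_lim] by simp
  show ?thesis using meas int LIMSEQ_unique[OF lim1 lim2] by blast
qed

end


locale model = hsetting C h for C :: "'a::euclidean_space set" and h +
  fixes P :: "'b measure" and fx :: "'b \<Rightarrow> 'a \<Rightarrow> real" and f :: "'a \<Rightarrow> real"
    and L \<eta> \<sigma>2 :: real and xs x0 :: 'a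
  assumes P: "prob_space P"
    and fxc: "\<forall>\<xi>\<in>space P. convex_on (interior C) (fx \<xi>) \<and> rel_smooth C L (fx \<xi>) h"
    and fxi: "\<forall>x\<in>interior C. integrable P (\<lambda>\<xi>. fx \<xi> x)"
    and fm: "\<forall>x\<in>interior C. f x = (\<integral>\<xi>. fx \<xi> x \<partial>P)"
    and fs: "rel_smooth C L f h"
    and Lpos: "L > 0"
    and xs: "xs \<in> interior C" "grad f xs = 0"
    and x0: "x0 \<in> interior C"
    and eta: "0 < \<eta>" "2 * \<eta> * L \<le> 1"
    and sig: "\<sigma>2 \<ge> 0"
    and noise: "\<forall>t. \<forall>\<omega>\<in>space (PiM UNIV (\<lambda>_::nat. P)). ennreal \<sigma>2 \<ge> ennreal (1 / (2 * \<eta>\<^sup>2)) *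
          (\<integral>\<^sup>+ \<xi>. ennreal (bregman (conj_on C h)
              (grad h (bsgd C h \<eta> fx x0 \<omega> t) - (2 * \<eta>) *\<^sub>R grad (fx \<xi>) xs)
              (grad h (bsgd C h \<eta> fx x0 \<omega> t))) \<partial>P)"
begin

abbreviation "S \<equiv> PiM UNIV (\<lambda>_::nat. P)"
abbreviation "X z \<omega> t \<equiv> bsgd C h \<eta> fx z \<omega> t"

definition N where "N z \<xi> = bregman (conj_on C h) (gh z - (2 * \<eta>) *\<^sub>R grad (fx \<xi>) xs) (gh z)"
definition A where "A z \<xi> = bregman (fx \<xi>) xs z + grad (fx \<xi>) xs \<bullet> (z - xs)"
definition Fr where "Fr T z \<omega> = \<eta> * (\<Sum>t<T. bregman f xs (X z \<omega> t)) + bregman h xs (X z \<omega> T)"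
definition R where "R = {X x0 \<omega> t | \<omega> t. \<omega> \<in> space S}"

lemma S_prob: "prob_space S" by (rule prob_space_PiM) (use P in auto)

lemma f_convex: "convex_on U f"
proof (rule convex_onI)
  fix t x y assume t: "(0::real) < t" "t < 1" and xy: "x \<in> U" "y \<in> U"
  have m: "(1 - t) *\<^sub>R x + t *\<^sub>R y \<in> U" using U_conv xy t by (intro convexD) auto
  have "f ((1 - t) *\<^sub>R x + t *\<^sub>R y) = (\<integral>\<xi>. fx \<xi> ((1 - t) *\<^sub>R x + t *\<^sub>R y) \<partial>P)" using fm m by blast
  also have "\<dots> \<le> (\<integral>\<xi>. (1 - t) * fx \<xi> x + t * fx \<xi> y \<partial>P)"
    using fxi xy fxc t m by (intro integral_mono) (auto intro!: convex_onD[of U])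
  also have "\<dots> = (1 - t) * f x + t * f y" using fxi xy fm by simp
  finally show "f ((1 - t) *\<^sub>R x + t *\<^sub>R y) \<le> (1 - t) * f x + t * f y" .
qed (rule U_conv)

lemma f_der: "z \<in> U \<Longrightarrow> (f has_derivative (\<lambda>v. grad f z \<bullet> v)) (at z)"
  using rs_deriv[OF fs] .

lemma Df_nonneg: "z \<in> U \<Longrightarrow> w \<in> U \<Longrightarrow> bregman f z w \<ge> 0"
  by (rule breg_nonneg_gen[OF f_convex fs])

lemma gexp: "w \<in> U \<Longrightarrow> (\<lambda>\<xi>. grad (fx \<xi>) w \<bullet> d) \<in> borel_measurable P \<and> integrable P (\<lambda>\<xi>. grad (fx \<xi>) w \<bullet> d)
         \<and> (\<integral>\<xi>. grad (fx \<xi>) w \<bullet> d \<partial>P) = grad f w \<bullet> d"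
  by (rule grad_exp[OF fxc fxi fm f_der])

lemma gmeas: "w \<in> U \<Longrightarrow> (\<lambda>\<xi>. grad (fx \<xi>) w) \<in> borel_measurable P"
  using gexp by (subst borel_measurable_euclidean_space) blast

lemma A_int: assumes z: "z \<in> U" shows "integrable P (A z) \<and> (\<integral>\<xi>. A z \<xi> \<partial>P) = bregman f xs z"
proof -
  have e: "A z \<xi> = fx \<xi> xs - fx \<xi> z - grad (fx \<xi>) z \<bullet> (xs - z) + grad (fx \<xi>) xs \<bullet> (z - xs)" for \<xi>
    unfolding A_def bregman_def ..
  have i1: "integrable P (\<lambda>\<xi>. grad (fx \<xi>) z \<bullet> (xs - z))" "integrable P (\<lambda>\<xi>. grad (fx \<xi>) xs \<bullet> (z - xs))"
    using gexp z xs by blast+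
  have j1: "(\<integral>\<xi>. grad (fx \<xi>) z \<bullet> (xs - z) \<partial>P) = grad f z \<bullet> (xs - z)"
    "(\<integral>\<xi>. grad (fx \<xi>) xs \<bullet> (z - xs) \<partial>P) = grad f xs \<bullet> (z - xs)"
    using gexp z xs by blast+
  have i2: "integrable P (\<lambda>\<xi>. fx \<xi> xs)" "integrable P (\<lambda>\<xi>. fx \<xi> z)" using fxi z xs by auto
  show ?thesis unfolding e using i1 i2 j1 fm z xs
    by (simp add: bregman_def)
qed

lemma N_nonneg: "z \<in> U \<Longrightarrow> N z \<xi> \<ge> 0"
proof -
  assume z: "z \<in> U"
  let ?u = "gh z - (2 * \<eta>) *\<^sub>R grad (fx \<xi>) xs"
  have "z \<bullet> ?u - h z \<le> conj_on C h ?u" unfolding conj_eq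
    by (rule conj_ge) (use z interior_subset in blast)
  then show ?thesis unfolding N_def breg_conj zh_gh[OF z] conj_gh[OF z]
    by (simp add: inner_diff_right inner_commute)
qed

lemma N_meas: "N z \<in> borel_measurable P"
proof -
  have c: "conj_on C h \<in> borel_measurable borel" by (rule borel_measurable_continuous_onI[OF conj_cont])
  have g: "(\<lambda>\<xi>. grad (fx \<xi>) xs) \<in> borel_measurable P" using gmeas xs by blast
  have "(\<lambda>\<xi>. conj_on C h (gh z - (2 * \<eta>) *\<^sub>R grad (fx \<xi>) xs)) \<in> borel_measurable P"
    by (rule measurable_compose[OF _ c]) (use g in measurable)
  then show ?thesis unfolding N_def breg_conj using g by measurable
qed

lemma X_U: "z \<in> U \<Longrightarrow> X z \<omega> t \<in> U"
  by (induction t) (auto simp: bsgd_step_eq zh_U)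

lemma X_shift: "X z \<omega> (Suc t) = X (X z \<omega> 1) (\<lambda>n. \<omega> (Suc n)) t"
  by (induction t) auto

lemma X_local: "(\<And>i. i < t \<Longrightarrow> \<omega> i = \<omega>' i) \<Longrightarrow> X z \<omega> t = X z \<omega>' t"
  by (induction t) auto

lemma R_U: "z \<in> R \<Longrightarrow> z \<in> U" unfolding R_def using X_U x0 by blast

lemma x0_R: "x0 \<in> R"
proof -
  interpret Sp: prob_space S by (rule S_prob)
  obtain \<omega> where "\<omega> \<in> space S" using Sp.not_empty by blast
  then show ?thesis unfolding R_def by (intro CollectI exI[of _ \<omega>] exI[of _ 0]) simp
qed

lemma R_step: assumes z: "z \<in> R" and \<xi>: "\<xi> \<in> space P"
  shows "bsgd_step C h \<eta> (grad (fx \<xi>) z) z \<in> R"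
proof -
  obtain \<omega> t where w: "\<omega> \<in> space S" "z = X x0 \<omega> t" using z unfolding R_def by blast
  let ?\<omega> = "fun_upd \<omega> t \<xi>"
  have sp: "?\<omega> \<in> space S" using w(1) \<xi> by (auto simp: space_PiM PiE_iff)
  have "X x0 ?\<omega> t = z" using w(2) by (metis X_local fun_upd_other less_irrefl)
  then have e: "bsgd_step C h \<eta> (grad (fx \<xi>) z) z = X x0 ?\<omega> (Suc t)" by simp
  show ?thesis unfolding R_def e using sp by blast
qed

lemma N_R: assumes z: "z \<in> R"
  shows "integrable P (N z) \<and> (\<integral>\<xi>. N z \<xi> \<partial>P) \<le> 2 * \<eta>\<^sup>2 * \<sigma>2"
proof -
  obtain \<omega> t where w: "\<omega> \<in> space S" "z = X x0 \<omega> t" using z unfolding R_def by blast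
  have zU: "z \<in> U" using R_U z by blast
  let ?I = "\<integral>\<^sup>+\<xi>. ennreal (N z \<xi>) \<partial>P"
  have n: "ennreal (1 / (2 * \<eta>\<^sup>2)) * ?I \<le> ennreal \<sigma>2"
    using noise w unfolding N_def by blast
  have "?I = ennreal (2 * \<eta>\<^sup>2) * (ennreal (1 / (2 * \<eta>\<^sup>2)) * ?I)"
    using eta by (simp add: mult.assoc[symmetric] ennreal_mult'[symmetric])
  also have "\<dots> \<le> ennreal (2 * \<eta>\<^sup>2) * ennreal \<sigma>2" by (rule mult_left_mono[OF n]) simp
  also have "\<dots> = ennreal (2 * \<eta>\<^sup>2 * \<sigma>2)" by (simp add: ennreal_mult'[symmetric])
  finally have I: "?I \<le> ennreal (2 * \<eta>\<^sup>2 * \<sigma>2)" .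
  have int: "integrable P (N z)"
    by (rule integrableI_nonneg[OF N_meas]) (use N_nonneg[OF zU] I in \<open>auto simp: top_unique less_top[symmetric]\<close>)
  have "ennreal (\<integral>\<xi>. N z \<xi> \<partial>P) = ?I"
    by (rule nn_integral_eq_integral[symmetric, OF int]) (use N_nonneg[OF zU] in auto)
  then have "ennreal (\<integral>\<xi>. N z \<xi> \<partial>P) \<le> ennreal (2 * \<eta>\<^sup>2 * \<sigma>2)" using I by simp
  then have "(\<integral>\<xi>. N z \<xi> \<partial>P) \<le> 2 * \<eta>\<^sup>2 * \<sigma>2" using sig by (simp add: ennreal_le_iff)
  with int show ?thesis by blast
qed

end


context model begin

lemma Fr_nonneg: "z \<in> U \<Longrightarrow> Fr T z \<omega> \<ge> 0"
  unfolding Fr_def using Df_nonneg[OF xs(1) X_U] breg_h_nonneg[OF xs(1) X_U] eta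
  by (intro add_nonneg_nonneg mult_nonneg_nonneg sum_nonneg) auto

lemma Fr_Suc:
  assumes z: "z \<in> U"
  shows "Fr (Suc T) z (case_nat \<xi> \<omega>') = \<eta> * bregman f xs z + Fr T (bsgd_step C h \<eta> (grad (fx \<xi>) z) z) \<omega>'"
proof -
  let ?z1 = "bsgd_step C h \<eta> (grad (fx \<xi>) z) z"
  have 1: "X z (case_nat \<xi> \<omega>') 1 = ?z1" by simp
  have s: "X z (case_nat \<xi> \<omega>') (Suc t) = X ?z1 \<omega>' t" for t
    using X_shift[of z "case_nat \<xi> \<omega>'" t] unfolding 1 by simp
  show ?thesis unfolding Fr_def sum.lessThan_Suc_shift s by (simp add: algebra_simps)
qed

lemma main_ind: "\<forall>z\<in>R. (\<integral>\<^sup>+\<omega>. ennreal (Fr T z \<omega>) \<partial>S) \<le> ennreal (bregman h xs z + real T * \<eta>\<^sup>2 * \<sigma>2)"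
proof (induction T)
  case 0
  interpret Sp: prob_space S by (rule S_prob)
  show ?case unfolding Fr_def by (simp add: Sp.emeasure_space_1)
next
  case (Suc T)
  interpret Sp: prob_space S by (rule S_prob)
  interpret PP: prob_space P by (rule P)
  show ?case
  proof
    fix z assume zR: "z \<in> R"
    have z: "z \<in> U" using R_U zR by blast
    define c where "c = \<eta> * bregman f xs z"
    have c0: "c \<ge> 0" unfolding c_def using eta Df_nonneg[OF xs(1) z] by simp
    define z1 where "z1 \<xi> = bsgd_step C h \<eta> (grad (fx \<xi>) z) z" for \<xi>
    have z1R: "\<xi> \<in> space P \<Longrightarrow> z1 \<xi> \<in> R" for \<xi> unfolding z1_def by (rule R_step[OF zR])
    have z1U: "z1 \<xi> \<in> U" for \<xi> unfolding z1_def bsgd_step_eq by (rule zh_U)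
    define K where "K = c + bregman h xs z + real T * \<eta>\<^sup>2 * \<sigma>2"
    define Rv where "Rv \<xi> = K - \<eta> * A z \<xi> + N z \<xi> / 2" for \<xi>
    have Aint: "integrable P (A z)" "(\<integral>\<xi>. A z \<xi> \<partial>P) = bregman f xs z" using A_int[OF z] by blast+
    have Nint: "integrable P (N z)" "(\<integral>\<xi>. N z \<xi> \<partial>P) \<le> 2 * \<eta>\<^sup>2 * \<sigma>2" using N_R[OF zR] by blast+
    have Rv_int: "integrable P Rv" unfolding Rv_def using Aint Nint by auto
    have Rv_val: "(\<integral>\<xi>. Rv \<xi> \<partial>P) = K - c + (\<integral>\<xi>. N z \<xi> \<partial>P) / 2"
      unfolding Rv_def using Aint Nint by (simp add: PP.prob_space c_def)
    have stepb: "c + bregman h xs (z1 \<xi>) + real T * \<eta>\<^sup>2 * \<sigma>2 \<le> Rv \<xi>" if \<xi>: "\<xi> \<in> space P" for \<xi>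
    proof -
      have cv: "convex_on U (fx \<xi>)" and sm: "rel_smooth C L (fx \<xi>) h" using fxc \<xi> by blast+
      have "\<eta> * A z \<xi> \<le> bregman h xs z - bregman h xs (z1 \<xi>) + N z \<xi> / 2"
        using step_ineq[OF z xs(1) cv sm Lpos eta] unfolding A_def N_def z1_def bsgd_step_eq .
      then show ?thesis unfolding Rv_def K_def by linarith
    qed
    have Rv_nn: "\<xi> \<in> space P \<Longrightarrow> Rv \<xi> \<ge> 0" for \<xi>
      using stepb[of \<xi>] c0 breg_h_nonneg[OF xs(1) z1U, of \<xi>] sig by (smt (verit) mult_nonneg_nonneg of_nat_0_le_iff zero_le_power2)
    show "(\<integral>\<^sup>+\<omega>. ennreal (Fr (Suc T) z \<omega>) \<partial>S) \<le> ennreal (bregman h xs z + real (Suc T) * \<eta>\<^sup>2 * \<sigma>2)"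
    proof (rule nn_integral_le_meas)
      fix g assume gm: "g \<in> borel_measurable S"
        and gle: "\<And>\<omega>. \<omega> \<in> space S \<Longrightarrow> g \<omega> \<le> ennreal (Fr (Suc T) z \<omega>)"
      have cn: "(\<lambda>(s, \<omega>). case_nat s \<omega>) \<in> measurable (P \<Otimes>\<^sub>M S) S"
        by measurable
      have "integral\<^sup>N S g = integral\<^sup>N (distr (P \<Otimes>\<^sub>M S) S (\<lambda>(s, \<omega>). case_nat s \<omega>)) g"
      proof -
        interpret SS: sequence_space P by unfold_locales
        show ?thesis by (simp add: SS.PiM_iter)
      qed
      also have "\<dots> = (\<integral>\<^sup>+p. g (case_nat (fst p) (snd p)) \<partial>(P \<Otimes>\<^sub>M S))"
        by (subst nn_integral_distr[OF cn]) (use gm in \<open>auto simp: split_beta\<close>)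
      also have "\<dots> = (\<integral>\<^sup>+\<xi>. \<integral>\<^sup>+\<omega>'. g (case_nat \<xi> \<omega>') \<partial>S \<partial>P)"
        by (subst Sp.nn_integral_fst[symmetric]) (use gm in auto)
      also have "\<dots> \<le> (\<integral>\<^sup>+\<xi>. ennreal (Rv \<xi>) \<partial>P)"
      proof (rule nn_integral_mono)
        fix \<xi> assume \<xi>: "\<xi> \<in> space P"
        have gm': "(\<lambda>\<omega>'. g (case_nat \<xi> \<omega>')) \<in> borel_measurable S"
          using gm \<xi> by measurable
        have "(\<integral>\<^sup>+\<omega>'. g (case_nat \<xi> \<omega>') \<partial>S) \<le> ennreal c + (\<integral>\<^sup>+\<omega>'. ennreal (Fr T (z1 \<xi>) \<omega>') \<partial>S)"
        proof (rule nn_integral_add_const_le[OF S_prob gm'])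
          fix \<omega>' assume \<omega>': "\<omega>' \<in> space S"
          have sp: "case_nat \<xi> \<omega>' \<in> space S" using \<omega>' \<xi> by (auto simp: space_PiM PiE_iff split: nat.split)
          have "g (case_nat \<xi> \<omega>') \<le> ennreal (Fr (Suc T) z (case_nat \<xi> \<omega>'))" by (rule gle[OF sp])
          also have "\<dots> = ennreal (c + Fr T (z1 \<xi>) \<omega>')" unfolding Fr_Suc[OF z] c_def z1_def ..
          also have "\<dots> = ennreal c + ennreal (Fr T (z1 \<xi>) \<omega>')" using c0 Fr_nonneg[OF z1U] by (simp add: ennreal_plus)
          finally show "g (case_nat \<xi> \<omega>') \<le> ennreal c + ennreal (Fr T (z1 \<xi>) \<omega>')" .
        qed
        also have "\<dots> \<le> ennreal c + ennreal (bregman h xs (z1 \<xi>) + real T * \<eta>\<^sup>2 * \<sigma>2)"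
          using Suc.IH z1R[OF \<xi>] by (intro add_left_mono) blast
        also have "\<dots> = ennreal (c + bregman h xs (z1 \<xi>) + real T * \<eta>\<^sup>2 * \<sigma>2)"
          using c0 breg_h_nonneg[OF xs(1) z1U, of \<xi>] sig by (simp add: ennreal_plus add.assoc)
        also have "\<dots> \<le> ennreal (Rv \<xi>)" using stepb[OF \<xi>] by (rule ennreal_leI)
        finally show "(\<integral>\<^sup>+\<omega>'. g (case_nat \<xi> \<omega>') \<partial>S) \<le> ennreal (Rv \<xi>)" .
      qed
      also have "\<dots> = ennreal (\<integral>\<xi>. Rv \<xi> \<partial>P)"
        by (rule nn_integral_eq_integral[OF Rv_int]) (use Rv_nn in auto)
      also have "\<dots> \<le> ennreal (bregman h xs z + real (Suc T) * \<eta>\<^sup>2 * \<sigma>2)"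
        using Nint(2) unfolding Rv_val K_def by (intro ennreal_leI) (simp add: algebra_simps)
      finally show "integral\<^sup>N S g \<le> ennreal (bregman h xs z + real (Suc T) * \<eta>\<^sup>2 * \<sigma>2)" .
    qed
  qed
qed

end


context model begin

lemma final:
  assumes T: "T \<ge> 1"
  shows "(\<integral>\<^sup>+ \<omega>. ennreal ((1 / real T) * (\<Sum>t\<in>{0..T}. bregman f xs (X x0 \<omega> t))) \<partial>S)
         \<le> ennreal (bregman h xs x0 / (\<eta> * real T) + \<eta> * \<sigma>2)"
proof -
  have Tp: "real T > 0" using T by simp
  have pw: "ennreal ((1 / real T) * (\<Sum>t\<in>{0..T}. bregman f xs (X x0 \<omega> t)))
            \<le> ennreal (1 / (\<eta> * real T)) * ennreal (Fr T x0 \<omega>)" for \<omega>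
  proof -
    let ?x = "X x0 \<omega> T"
    have xU: "?x \<in> U" using X_U x0 by blast
    have s: "(\<Sum>t\<in>{0..T}. bregman f xs (X x0 \<omega> t)) = (\<Sum>t<T. bregman f xs (X x0 \<omega> t)) + bregman f xs ?x"
      by (simp add: atLeast0AtMost lessThan_Suc_atMost[symmetric])
    have d1: "bregman f xs ?x \<le> L * bregman h xs ?x" using fs xs(1) xU unfolding rel_smooth_def by blast
    have hn: "bregman h xs ?x \<ge> 0" using breg_h_nonneg[OF xs(1) xU] .
    have "\<eta> * bregman f xs ?x \<le> \<eta> * (L * bregman h xs ?x)" using d1 eta by (simp add: mult_left_mono)
    also have "\<dots> = (\<eta> * L) * bregman h xs ?x" by simp
    also have "\<dots> \<le> bregman h xs ?x" using eta hn mult_right_mono[of "\<eta> * L" 1 "bregman h xs ?x"] by simp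
    finally have "\<eta> * (\<Sum>t\<in>{0..T}. bregman f xs (X x0 \<omega> t)) \<le> Fr T x0 \<omega>"
      unfolding s Fr_def by (simp add: distrib_left)
    then have "(1 / (\<eta> * real T)) * (\<eta> * (\<Sum>t\<in>{0..T}. bregman f xs (X x0 \<omega> t))) \<le> (1 / (\<eta> * real T)) * Fr T x0 \<omega>"
      using eta Tp by (intro mult_left_mono) auto
    then have "(1 / real T) * (\<Sum>t\<in>{0..T}. bregman f xs (X x0 \<omega> t)) \<le> (1 / (\<eta> * real T)) * Fr T x0 \<omega>"
      using eta by simp
    then have "ennreal ((1 / real T) * (\<Sum>t\<in>{0..T}. bregman f xs (X x0 \<omega> t))) \<le> ennreal ((1 / (\<eta> * real T)) * Fr T x0 \<omega>)"
      by (rule ennreal_leI)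
    also have "\<dots> = ennreal (1 / (\<eta> * real T)) * ennreal (Fr T x0 \<omega>)"
      using eta Tp by (intro ennreal_mult') simp
    finally show ?thesis .
  qed
  have "(\<integral>\<^sup>+ \<omega>. ennreal ((1 / real T) * (\<Sum>t\<in>{0..T}. bregman f xs (X x0 \<omega> t))) \<partial>S)
       \<le> (\<integral>\<^sup>+ \<omega>. ennreal (1 / (\<eta> * real T)) * ennreal (Fr T x0 \<omega>) \<partial>S)"
    by (intro nn_integral_mono pw)
  also have "\<dots> \<le> ennreal (1 / (\<eta> * real T)) * (\<integral>\<^sup>+ \<omega>. ennreal (Fr T x0 \<omega>) \<partial>S)"
    by (rule nn_integral_cmult_le) (use eta Tp in simp)
  also have "\<dots> \<le> ennreal (1 / (\<eta> * real T)) * ennreal (bregman h xs x0 + real T * \<eta>\<^sup>2 * \<sigma>2)"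
    using main_ind x0_R by (intro mult_left_mono) auto
  also have "\<dots> = ennreal (1 / (\<eta> * real T) * (bregman h xs x0 + real T * \<eta>\<^sup>2 * \<sigma>2))"
    using eta Tp by (intro ennreal_mult'[symmetric]) simp
  also have "1 / (\<eta> * real T) * (bregman h xs x0 + real T * \<eta>\<^sup>2 * \<sigma>2) = bregman h xs x0 / (\<eta> * real T) + \<eta> * \<sigma>2"
    using eta Tp by (simp add: field_simps power2_eq_square)
  finally show ?thesis .
qed

end
theorem theorem3:
  fixes C :: "'a::euclidean_space set"
    and h :: "'a \<Rightarrow> real"
    and P :: "'b measure"
    and fx :: "'b \<Rightarrow> 'a \<Rightarrow> real"
    and f :: "'a \<Rightarrow> real"
    and L \<eta> \<sigma>2 :: real
    and xstar x0 :: 'a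
    and T :: nat
  assumes C: "closed C" "convex C"
    and h_C2: "\<exists>H :: 'a \<Rightarrow> 'a \<Rightarrow>\<^sub>L 'a.
          (\<forall>x\<in>interior C. (h has_derivative (\<lambda>v. grad h x \<bullet> v)) (at x)
                          \<and> (grad h has_derivative blinfun_apply (H x)) (at x))
          \<and> continuous_on (interior C) H"
    and h_strict: "strict_convex_on (interior C) h"
    and h_unique: "\<forall>y. \<exists>!x. x \<in> C \<and> (\<forall>z\<in>C. h x - x \<bullet> y \<le> h z - z \<bullet> y)"
    and h_interior: "\<forall>y x. x \<in> C \<and> (\<forall>z\<in>C. h x - x \<bullet> y \<le> h z - z \<bullet> y) \<longrightarrow> x \<in> interior C"
    and P: "prob_space P"
    and fx_convex: "\<forall>\<xi>\<in>space P. convex_on (interior C) (fx \<xi>)"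
    and fx_smooth: "\<forall>\<xi>\<in>space P. rel_smooth C L (fx \<xi>) h"
    and fx_integrable: "\<forall>x\<in>interior C. integrable P (\<lambda>\<xi>. fx \<xi> x)"
    and f_mean: "\<forall>x\<in>interior C. f x = (\<integral>\<xi>. fx \<xi> x \<partial>P)"
    and f_smooth: "rel_smooth C L f h"
    and L_pos: "L > 0"
    and xstar: "xstar \<in> interior C" "\<forall>x\<in>interior C. f xstar \<le> f x" "grad f xstar = 0"
    and x0: "x0 \<in> interior C"
    and eta: "0 < \<eta>" "\<eta> \<le> 1 / (2 * L)"
    and sigma: "\<sigma>2 \<ge> 0"
    and noise: "\<forall>t. \<forall>\<omega>\<in>space (PiM UNIV (\<lambda>_::nat. P)). ennreal \<sigma>2 \<ge> ennreal (1 / (2 * \<eta>\<^sup>2)) *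
          (\<integral>\<^sup>+ \<xi>. ennreal (bregman (conj_on C h)
              (grad h (bsgd C h \<eta> fx x0 \<omega> t) - (2 * \<eta>) *\<^sub>R grad (fx \<xi>) xstar)
              (grad h (bsgd C h \<eta> fx x0 \<omega> t))) \<partial>P)"
    and T: "T \<ge> 1"
  shows "(\<integral>\<^sup>+ \<omega>. ennreal ((1 / real T) *
            (\<Sum>t\<in>{0..T}. bregman f xstar (bsgd C h \<eta> fx x0 \<omega> t)))
          \<partial>(PiM UNIV (\<lambda>_::nat. P)))
         \<le> ennreal (bregman h xstar x0 / (\<eta> * real T) + \<eta> * \<sigma>2)"
proof -
  obtain H :: "'a \<Rightarrow> 'a \<Rightarrow>\<^sub>L 'a" where HH:
    "\<forall>x\<in>interior C. (h has_derivative (\<lambda>v. grad h x \<bullet> v)) (at x)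
                          \<and> (grad h has_derivative blinfun_apply (H x)) (at x)"
    using h_C2 by blast
  have ghc: "continuous_on (interior C) (grad h)"
    using HH by (intro continuous_at_imp_continuous_on) (blast intro: has_derivative_continuous)
  have hder: "\<forall>x\<in>interior C. (h has_derivative (\<lambda>v. grad h x \<bullet> v)) (at x)" using HH by blast
  interpret hsetting C h
    by unfold_locales (rule C(2) hder ghc h_strict h_unique h_interior)+
  have e2: "2 * \<eta> * L \<le> 1"
  proof -
    have "\<eta> * (2 * L) \<le> 1 / (2 * L) * (2 * L)" using eta L_pos by (intro mult_right_mono) auto
    then have "\<eta> * (2 * L) \<le> 1" using L_pos by simp
    then show ?thesis by (metis mult.assoc mult.commute)
  qed
  have fxc: "\<forall>\<xi>\<in>space P. convex_on (interior C) (fx \<xi>) \<and> rel_smooth C L (fx \<xi>) h"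
    using fx_convex fx_smooth by blast
  interpret model C h P fx f L \<eta> \<sigma>2 xstar x0
    by (intro model.intro model_axioms.intro hsetting_axioms) (rule P fxc fx_integrable f_mean f_smooth L_pos xstar(1) xstar(3) x0 eta(1) e2 sigma noise)+
  show ?thesis using final[OF T] .
qed

end
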